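(* If $k$ is even and sufficiently large, and $n$ is even, then for every integer $i$ with $k/2<i<k$, $$N(CM,k,n)\ge \frac{n(5ik-k+i+i^2)-2(k-i)}{(2k+3+i)ik}.$$ In particular, for every $\varepsilon>0$ there is $k_0$ such that for every even $k>k_0$ there is $n_0(k)$ such that for every even $n>n_0(k)$ we have $N(CM,k,n)>(11/5-\varepsilon)\,n/k$.
   Context: We are given $n$ balls, the set $[n]=\{1,\dots,n\}$, each colored with one of two colors by an unknown coloring. A ball $i$ is a majority ball if more than $n/2$ balls have the same color as $i$. A query is a subset $Q\subseteq[n]$ with $|Q|=k$. In the Counting Model (CM), the answer to a query $Q$ is the number $j\le k/2$ such that $Q$ contains exactly $j$ balls of one of the colors (and $k-j$ of the other); no indication of which color is given. A non-adaptive strategy is a family of queries $Q_1,\dots,Q_q$ fixed in advance. It succeeds if for every coloring, the answers determine the outcome: either every coloring consistent with the answers has no majority ball, or there is a ball that is a majority ball in every coloring consistent with the answers. $N(CM,k,n)$ is the minimum number of queries in a successful non-adaptive strategy. *)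

theory Defs
  imports Main "HOL-Library.Extended_Real"
begin

text \<open>Balls are 1..n; a coloring is a function nat => bool (only values on 1..n matter).\<close>

definition maj_ball :: "nat \<Rightarrow> (nat \<Rightarrow> bool) \<Rightarrow> nat \<Rightarrow> bool" where
  "maj_ball n c i \<longleftrightarrow> i \<in> {1..n} \<and> 2 * card {j \<in> {1..n}. c j = c i} > n"

definition cm_answer :: "(nat \<Rightarrow> bool) \<Rightarrow> nat set \<Rightarrow> nat" where
  "cm_answer c Q = min (card {j \<in> Q. c j}) (card {j \<in> Q. \<not> c j})"

definition valid_queries :: "nat \<Rightarrow> nat \<Rightarrow> nat set list \<Rightarrow> bool" where
  "valid_queries k n qs \<longleftrightarrow> (\<forall>Q \<in> set qs. Q \<subseteq> {1..n} \<and> card Q = k)"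

definition consistent :: "nat set list \<Rightarrow> (nat \<Rightarrow> bool) \<Rightarrow> (nat \<Rightarrow> bool) \<Rightarrow> bool" where
  "consistent qs c c' \<longleftrightarrow> (\<forall>Q \<in> set qs. cm_answer c' Q = cm_answer c Q)"

definition succeeds :: "nat \<Rightarrow> nat set list \<Rightarrow> bool" where
  "succeeds n qs \<longleftrightarrow> (\<forall>c.
     (\<forall>c'. consistent qs c c' \<longrightarrow> \<not> (\<exists>i. maj_ball n c' i)) \<or>
     (\<exists>i. \<forall>c'. consistent qs c c' \<longrightarrow> maj_ball n c' i))"

text \<open>N(CM,k,n): minimum number of queries of a successful non-adaptive strategy
  (infinity if there is none).\<close>
definition N_CM :: "nat \<Rightarrow> nat \<Rightarrow> enat" where
  "N_CM k n = (INF qs \<in> {qs. valid_queries k n qs \<and> succeeds n qs}. enat (length qs))"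

end

theory Submission
  imports Defs
begin

lemma card_split_filter:
  assumes "finite Q"
  shows "card {j\<in>Q. c j} + card {j\<in>Q. \<not> c j} = card Q"
proof -
  have "{j\<in>Q. c j} \<union> {j\<in>Q. \<not> c j} = Q" by auto
  moreover have "{j\<in>Q. c j} \<inter> {j\<in>Q. \<not> c j} = {}" by auto
  ultimately show ?thesis using assms
    by (metis (no_types, lifting) card_Un_disjoint finite_Un)
qed

lemma cm_answer_same:
  assumes "finite Q"
    and "card {j\<in>Q. c' j} = card {j\<in>Q. c j} \<or> card {j\<in>Q. c' j} + card {j\<in>Q. c j} = card Q"
  shows "cm_answer c' Q = cm_answer c Q"
  using assms card_split_filter[OF assms(1), of c] card_split_filter[OF assms(1), of c']
  unfolding cm_answer_def by auto

lemma no_maj_balanced: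
  assumes "2 * card {j\<in>{1..n}. c j} = n"
  shows "\<not> maj_ball n c i"
proof
  assume m: "maj_ball n c i"
  have s: "card {j\<in>{1..n}. c j} + card {j\<in>{1..n}. \<not> c j} = n"
    using card_split_filter[of "{1..n}" c] by simp
  show False
  proof (cases "c i")
    case True
    then have "{j \<in> {1..n}. c j = c i} = {j\<in>{1..n}. c j}" by auto
    then show False using m assms unfolding maj_ball_def by auto
  next
    case False
    then have "{j \<in> {1..n}. c j = c i} = {j\<in>{1..n}. \<not> c j}" by auto
    then show False using m assms s unfolding maj_ball_def by auto
  qed
qed

lemma fail_lemma:
  assumes "2 * card {j\<in>{1..n}. c j} = n"
    and "consistent qs c c'" and "maj_ball n c' i"
  shows "\<not> succeeds n qs"
proof
  assume s: "succeeds n qs"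
  have cc: "consistent qs c c" unfolding consistent_def by simp
  from s have "(\<forall>c'. consistent qs c c' \<longrightarrow> \<not> (\<exists>i. maj_ball n c' i)) \<or>
     (\<exists>i. \<forall>c'. consistent qs c c' \<longrightarrow> maj_ball n c' i)" unfolding succeeds_def by blast
  then show False
  proof
    assume "\<forall>c'. consistent qs c c' \<longrightarrow> \<not> (\<exists>i. maj_ball n c' i)"
    then show False using assms(2,3) by blast
  next
    assume "\<exists>i. \<forall>c'. consistent qs c c' \<longrightarrow> maj_ball n c' i"
    then obtain i0 where "maj_ball n c i0" using cc by blast
    then show False using no_maj_balanced[OF assms(1)] by blast
  qed
qed

definition sw :: "nat \<Rightarrow> nat \<Rightarrow> nat \<Rightarrow> nat" where
  "sw a b x = (if x = a then b else if x = b then a else x)"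

lemma sw_invol: "sw a b (sw a b x) = x" unfolding sw_def by auto

lemma sw_inj: "inj_on (sw a b) A"
  by (rule inj_onI) (metis sw_invol)

lemma sw_in_image: "sw a b y \<in> A \<Longrightarrow> y \<in> sw a b ` A"
proof -
  assume "sw a b y \<in> A"
  then have "sw a b (sw a b y) \<in> sw a b ` A" by (rule imageI)
  then show ?thesis by (simp add: sw_invol)
qed

lemma card_sw:
  assumes "sw a b ` Q = Q"
  shows "card {x\<in>Q. P (sw a b x)} = card {x\<in>Q. P x}"
proof -
  have "{x\<in>Q. P (sw a b x)} = sw a b ` {x\<in>Q. P x}"
  proof
    show "{x \<in> Q. P (sw a b x)} \<subseteq> sw a b ` {x \<in> Q. P x}"
    proof
      fix x assume x: "x \<in> {x \<in> Q. P (sw a b x)}"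
      then have "sw a b x \<in> sw a b ` Q" by simp
      then have "sw a b x \<in> Q" using assms by simp
      then have "sw a b x \<in> {x \<in> Q. P x}" using x by simp
      then show "x \<in> sw a b ` {x \<in> Q. P x}" by (rule sw_in_image)
    qed
  next
    show "sw a b ` {x \<in> Q. P x} \<subseteq> {x \<in> Q. P (sw a b x)}"
    proof
      fix y assume "y \<in> sw a b ` {x \<in> Q. P x}"
      then obtain x where x: "x \<in> Q" "P x" "y = sw a b x" by blast
      have "y \<in> sw a b ` Q" using x by blast
      then have "y \<in> Q" using assms by simp
      moreover have "P (sw a b y)" using x by (simp add: sw_invol)
      ultimately show "y \<in> {x \<in> Q. P (sw a b x)}" by simp
    qed
  qed
  then show ?thesis using card_image[OF sw_inj] by simp
qed

lemma sw_mem: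
  assumes "a \<in> Q \<longleftrightarrow> b \<in> Q" "x \<in> Q"
  shows "sw a b x \<in> Q"
proof (cases "x = a")
  case True then show ?thesis using assms by (simp add: sw_def)
next
  case False
  then show ?thesis
  proof (cases "x = b")
    case True then show ?thesis using assms False by (simp add: sw_def)
  next
    case False2: False
    then show ?thesis using assms False by (simp add: sw_def)
  qed
qed

lemma sw_image:
  assumes "a \<in> Q \<longleftrightarrow> b \<in> Q"
  shows "sw a b ` Q = Q"
proof
  show "sw a b ` Q \<subseteq> Q" using sw_mem[OF assms] by blast
  show "Q \<subseteq> sw a b ` Q"
  proof
    fix x assume "x \<in> Q"
    then have "sw a b x \<in> Q" using sw_mem[OF assms] by blast
    then show "x \<in> sw a b ` Q" by (rule sw_in_image)
  qed
qed

definition tau :: "nat set list \<Rightarrow> nat \<Rightarrow> nat set" where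
  "tau qs x = {j. j < length qs \<and> x \<in> qs ! j}"

lemma type_fail:
  assumes "even n" "n \<ge> 2" "2 * card (tau qs ` {1..n}) + 2 \<le> n"
  shows "\<not> succeeds n qs"
proof -
  define T where "T = tau qs ` {1..n}"
  define rep where "rep t = (SOME x. x \<in> {1..n} \<and> tau qs x = t)" for t
  have rep: "rep t \<in> {1..n} \<and> tau qs (rep t) = t" if "t \<in> T" for t
  proof -
    from that obtain x where "x \<in> {1..n} \<and> tau qs x = t" unfolding T_def by blast
    then show ?thesis unfolding rep_def by (rule someI)
  qed
  define Rep where "Rep = rep ` T"
  have injrep: "inj_on rep T"
  proof (rule inj_onI)
    fix s t assume "s \<in> T" "t \<in> T" "rep s = rep t"
    then show "s = t" using rep by metis
  qed
  have cRep: "card Rep = card T" unfolding Rep_def using card_image[OF injrep] .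
  have Rsub: "Rep \<subseteq> {1..n}" unfolding Rep_def using rep by blast
  have fR: "finite Rep" using finite_subset[OF Rsub] by simp
  have cT: "2 * card T + 2 \<le> n" using assms(3) unfolding T_def .
  have cD: "card ({1..n} - Rep) = n - card Rep"
    using card_Diff_subset[OF fR Rsub] by simp
  have "n div 2 - 1 - card Rep \<le> card ({1..n} - Rep)"
    using cD cRep cT by simp
  then obtain B' where B': "B' \<subseteq> {1..n} - Rep" "card B' = n div 2 - 1 - card Rep"
    using obtain_subset_with_card_n by metis
  define B where "B = Rep \<union> B'"
  have Bsub: "B \<subseteq> {1..n}" unfolding B_def using Rsub B'(1) by blast
  have fB': "finite B'" using finite_subset[OF B'(1)] by simp
  have dj: "Rep \<inter> B' = {}" using B'(1) by blast
  have cB: "card B = n div 2 - 1"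
  proof -
    have "card B = card Rep + card B'" unfolding B_def
      using card_Un_disjoint[OF fR fB' dj] .
    then show ?thesis using B'(2) cRep cT assms(1) by simp
  qed
  define c where "c x = (x \<notin> B)" for x
  have redset: "{j\<in>{1..n}. c j} = {1..n} - B" unfolding c_def by blast
  have cred: "card {j\<in>{1..n}. c j} = n div 2 + 1"
  proof -
    have "card ({1..n} - B) = n - card B"
      using card_Diff_subset[OF finite_subset[OF Bsub] Bsub] by simp
    moreover obtain m where "n = 2 * m" using assms(1) by (elim evenE)
    ultimately show ?thesis unfolding redset using cB assms(2) by simp
  qed
  have blueset: "{j\<in>{1..n}. \<not> c j} = B" unfolding c_def using Bsub by blast
  have cc: "consistent qs c c" unfolding consistent_def by simp
  have "{j\<in>{1..n}. c j} \<noteq> {}" using cred by (metis card.empty add_is_0 one_neq_zero)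
  then obtain i0 where i0: "i0 \<in> {1..n}" "c i0" by blast
  have maj0: "maj_ball n c i0"
  proof -
    have "{j \<in> {1..n}. c j = c i0} = {j\<in>{1..n}. c j}" using i0(2) by simp
    then show ?thesis unfolding maj_ball_def using i0(1) cred assms(1) by simp
  qed
  have second: "\<exists>c'. consistent qs c c' \<and> \<not> maj_ball n c' i" for i
  proof (cases "i \<in> {1..n} \<and> c i")
    case False
    have "\<not> maj_ball n c i"
    proof
      assume m: "maj_ball n c i"
      then have ii: "i \<in> {1..n}" unfolding maj_ball_def by simp
      with False have "\<not> c i" by simp
      then have "{j \<in> {1..n}. c j = c i} = B" using blueset by simp
      then have "2 * card {j \<in> {1..n}. c j = c i} \<le> n" using cB by simp
      then show False using m unfolding maj_ball_def by simp
    qed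
    then show ?thesis using cc by blast
  next
    case True
    define y where "y = rep (tau qs i)"
    have tT: "tau qs i \<in> T" unfolding T_def using True by simp
    have yB: "y \<in> B" unfolding y_def B_def Rep_def using tT by simp
    have ty: "tau qs y = tau qs i" unfolding y_def using rep[OF tT] by simp
    have yn: "y \<in> {1..n}" using yB Bsub by blast
    define c' where "c' x = c (sw i y x)" for x
    have cons: "consistent qs c c'"
      unfolding consistent_def
    proof
      fix Q assume "Q \<in> set qs"
      then obtain j where j: "j < length qs" "Q = qs ! j" by (metis in_set_conv_nth)
      have "j \<in> tau qs i \<longleftrightarrow> j \<in> tau qs y" using ty by simp
      then have "i \<in> Q \<longleftrightarrow> y \<in> Q" using j unfolding tau_def by simp
      then have inv: "sw i y ` Q = Q" by (rule sw_image)
      show "cm_answer c' Q = cm_answer c Q"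
        unfolding cm_answer_def c'_def
        using card_sw[OF inv, of c] card_sw[OF inv, of "\<lambda>x. \<not> c x"] by simp
    qed
    have "\<not> maj_ball n c' i"
    proof
      assume m: "maj_ball n c' i"
      have "\<not> c y" using yB unfolding c_def by simp
      then have ci': "\<not> c' i" unfolding c'_def sw_def by simp
      have "i \<in> {1..n} \<longleftrightarrow> y \<in> {1..n}" using True yn by simp
      then have inv: "sw i y ` {1..n} = {1..n}" by (rule sw_image)
      have "{j \<in> {1..n}. c' j = c' i} = {j \<in> {1..n}. \<not> c (sw i y j)}"
        using ci' unfolding c'_def by simp
      then have "card {j \<in> {1..n}. c' j = c' i} = card B"
        using card_sw[OF inv, of "\<lambda>x. \<not> c x"] blueset by simp
      then have "2 * card {j \<in> {1..n}. c' j = c' i} \<le> n" using cB by simp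
      then show False using m unfolding maj_ball_def by simp
    qed
    then show ?thesis using cons by blast
  qed
  show ?thesis
    unfolding succeeds_def using cc maj0 second by blast
qed

lemma tau_sub: "tau qs x \<subseteq> {..<length qs}" unfolding tau_def by auto

lemma types_bound:
  assumes "even n" "n \<ge> 2" "succeeds n qs"
  shows "n \<le> 2 * 2 ^ length qs + 1"
proof -
  have "tau qs ` {1..n} \<subseteq> Pow {..<length qs}" using tau_sub by blast
  then have "card (tau qs ` {1..n}) \<le> card (Pow {..<length qs})"
    by (intro card_mono) auto
  also have "\<dots> = 2 ^ length qs" by (simp add: card_Pow)
  finally have "card (tau qs ` {1..n}) \<le> 2 ^ length qs" .
  moreover have "\<not> (2 * card (tau qs ` {1..n}) + 2 \<le> n)"
    using type_fail assms by blast
  ultimately show ?thesis by linarith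
qed

definition sv :: "nat option \<Rightarrow> nat set" where
  "sv w = (case w of None \<Rightarrow> {} | Some v \<Rightarrow> {v})"

lemma sv_None[simp]: "sv None = {}" and sv_Some[simp]: "sv (Some v) = {v}"
  unfolding sv_def by simp_all

definition cyc :: "(nat \<Rightarrow> nat set) \<Rightarrow> nat option list \<Rightarrow> nat list \<Rightarrow> bool" where
  "cyc S ws xs \<longleftrightarrow> length ws = length xs \<and> xs \<noteq> [] \<and> (length xs = 1 \<longrightarrow> ws = [None])
     \<and> distinct ws \<and> distinct xs \<and> (\<forall>j. 0 < j \<and> j < length ws \<longrightarrow> ws ! j \<noteq> None)
     \<and> (\<forall>j<length xs. S (xs ! j) = sv (ws ! j) \<union> sv (ws ! (Suc j mod length xs)))"

lemma cyc_single: "S x = {} \<Longrightarrow> cyc S [None] [x]"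
proof -
  assume "S x = {}"
  moreover have "\<forall>j. j = 0 \<or> 0 < (j::nat)" by (metis gr0I)
  ultimately show ?thesis unfolding cyc_def by simp
qed

definition pth :: "(nat \<Rightarrow> nat set) \<Rightarrow> nat set \<Rightarrow> nat set \<Rightarrow> bool \<Rightarrow> nat option list \<Rightarrow> nat list \<Rightarrow> bool" where
  "pth S V Lb H ws xs \<longleftrightarrow> length ws = Suc (length xs) \<and> distinct ws \<and> distinct xs \<and> set xs \<subseteq> Lb
     \<and> (\<forall>v. Some v \<in> set ws \<longrightarrow> v \<in> V) \<and> (\<forall>j. 0 < j \<and> j < length ws \<longrightarrow> ws ! j \<noteq> None)
     \<and> (\<forall>j<length xs. S (xs ! j) = sv (ws ! j) \<union> sv (ws ! Suc j)) \<and> (ws ! 0 = None \<longleftrightarrow> H)"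

lemma pth_len:
  assumes "finite V" "pth S V Lb H ws xs"
  shows "length xs \<le> card V"
proof -
  have "set ws \<subseteq> insert None (Some ` V)"
  proof
    fix w assume "w \<in> set ws"
    show "w \<in> insert None (Some ` V)"
    proof (cases w)
      case (Some v)
      have "\<forall>v. Some v \<in> set ws \<longrightarrow> v \<in> V" using assms(2) unfolding pth_def by simp
      then show ?thesis using Some \<open>w \<in> set ws\<close> by simp
    qed simp
  qed
  then have "card (set ws) \<le> card (insert None (Some ` V))"
    using assms(1) by (intro card_mono) auto
  also have "\<dots> \<le> Suc (card (Some ` V))" by (rule card_insert_le_m1) simp_all
  also have "\<dots> = Suc (card V)" by (simp add: card_image)
  finally have "card (set ws) \<le> Suc (card V)" .
  moreover have "card (set ws) = length ws" using assms(2) unfolding pth_def by (simp add: distinct_card)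
  ultimately show ?thesis using assms(2) unfolding pth_def by simp
qed

lemma sv_mem: "v \<in> sv w \<longleftrightarrow> w = Some v" by (cases w) auto

lemma two_elem:
  assumes "finite A" "v \<in> A" "card A \<le> 2"
  shows "A = {v} \<or> (\<exists>u. u \<noteq> v \<and> A = {v, u})"
proof (cases "A = {v}")
  case True then show ?thesis by simp
next
  case False
  then obtain u where u: "u \<in> A" "u \<noteq> v" using assms(2) by blast
  have sub: "{v, u} \<subseteq> A" using u assms(2) by simp
  have "card {v, u} = 2" using u(2) by simp
  then have "{v, u} = A" using card_subset_eq[OF assms(1) sub] assms(3) card_mono[OF assms(1) sub] by simp
  then show ?thesis using u(2) by blast
qed

lemma maxpath_struct:
  assumes fV: "finite V"
    and LS: "\<forall>x\<in>Lb. S x \<subseteq> V \<and> S x \<noteq> {} \<and> card (S x) \<le> 2"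
    and Lne: "Lb \<noteq> {}"
    and deg2: "\<forall>v\<in>V. \<exists>x y. x \<in> Lb \<and> y \<in> Lb \<and> x \<noteq> y \<and> v \<in> S x \<and> v \<in> S y"
  shows "\<exists>ws xs. cyc S ws xs \<and> set xs \<subseteq> Lb \<and> (\<forall>v. Some v \<in> set ws \<longrightarrow> v \<in> V)"
proof -
  define H where "H = (\<exists>x\<in>Lb. card (S x) = 1)"
  define P where "P m = (\<exists>ws xs. pth S V Lb H ws xs \<and> length xs = m)" for m
  have P0: "P 0"
  proof (cases H)
    case True
    have "\<forall>j. j = 0 \<or> 0 < (j::nat)" by (metis gr0I)
    then have "pth S V Lb H [None] []" unfolding pth_def using True by simp
    then show ?thesis unfolding P_def by auto
  next
    case False
    obtain x where x: "x \<in> Lb" using Lne by blast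
    then obtain v where v: "v \<in> S x" using LS by blast
    have "v \<in> V" using LS x v by blast
    then have "pth S V Lb H [Some v] []" unfolding pth_def using False by simp
    then show ?thesis unfolding P_def by auto
  qed
  have Pb: "\<forall>y. P y \<longrightarrow> y \<le> card V" unfolding P_def using pth_len[OF fV] by blast
  obtain m where m: "P m" "\<forall>y. P y \<longrightarrow> y \<le> m"
    using Nat.ex_has_greatest_nat[OF P0 Pb] by blast
  then obtain ws xs where p: "pth S V Lb H ws xs" and lm: "length xs = m" unfolding P_def by blast
  have lw: "length ws = Suc m" using p lm unfolding pth_def by simp
  have dw: "distinct ws" and dx: "distinct xs" and sxL: "set xs \<subseteq> Lb"
    and wV: "\<forall>v. Some v \<in> set ws \<longrightarrow> v \<in> V"
    and nN: "\<forall>j. 0 < j \<and> j < length ws \<longrightarrow> ws ! j \<noteq> None"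
    and Sx: "\<forall>j<length xs. S (xs ! j) = sv (ws ! j) \<union> sv (ws ! Suc j)"
    and h0: "ws ! 0 = None \<longleftrightarrow> H"
    using p unfolding pth_def by blast+
  have nolonger: "\<not> pth S V Lb H ws' xs'" if "length xs' = Suc m" for ws' xs'
    using m(2) that unfolding P_def by fastforce
  show ?thesis
  proof (cases "ws ! m")
    case None
    then have m0: "m = 0" using nN lw by (metis gr0I lessI)
    then have H using h0 None by simp
    then obtain h where h: "h \<in> Lb" "card (S h) = 1" unfolding H_def by blast
    then obtain v where v: "S h = {v}" using card_1_singletonE by blast
    have vV: "v \<in> V" using LS h(1) v by blast
    have "pth S V Lb H [None, Some v] [h]"
      unfolding pth_def using h(1) vV v \<open>H\<close> by (auto simp: nth_Cons split: nat.splits)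
    then show ?thesis using nolonger[of "[h]" "[None, Some v]"] m0 by simp
  next
    case (Some v)
    have vin: "Some v \<in> set ws" using Some lw by (metis lessI nth_mem)
    then have vV: "v \<in> V" using wV by blast
    obtain a b where ab: "a \<in> Lb" "b \<in> Lb" "a \<noteq> b" "v \<in> S a" "v \<in> S b" using deg2 vV by blast
    define y where "y = (if xs \<noteq> [] \<and> a = last xs then b else a)"
    have y: "y \<in> Lb" "v \<in> S y" "xs \<noteq> [] \<longrightarrow> y \<noteq> last xs"
    proof -
      show "y \<in> Lb" unfolding y_def using ab(1,2) by simp
      show "v \<in> S y" unfolding y_def using ab(4,5) by simp
      show "xs \<noteq> [] \<longrightarrow> y \<noteq> last xs" unfolding y_def using ab(3) by simp
    qed
    have ynot: "y \<notin> set xs"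
    proof
      assume "y \<in> set xs"
      then obtain i where i: "i < length xs" "xs ! i = y" by (metis in_set_conv_nth)
      have "S (xs ! i) = sv (ws ! i) \<union> sv (ws ! Suc i)" using Sx i(1) by simp
      then have "v \<in> sv (ws ! i) \<union> sv (ws ! Suc i)" using i(2) y(2) by simp
      then have "ws ! i = Some v \<or> ws ! Suc i = Some v" by (simp add: sv_mem)
      moreover have "ws ! m = Some v" by (rule Some)
      moreover have "i < length ws" "Suc i < length ws" "m < length ws" using i(1) lm lw by simp_all
      ultimately have "i = m \<or> Suc i = m"
        using nth_eq_iff_index_eq[OF dw] by metis
      then have im: "Suc i = m" using i lm by simp
      have xne: "xs \<noteq> []" using i by auto
      then have "last xs = xs ! (length xs - 1)" by (rule last_conv_nth)
      then have "y = last xs" using i(2) lm by (simp add: im[symmetric])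
      then show False using y(3) xne by simp
    qed
    have fSy: "finite (S y)" using LS y(1) fV finite_subset by blast
    have "S y = {v} \<or> (\<exists>u. u \<noteq> v \<and> S y = {v, u})"
      using two_elem[OF fSy y(2)] LS y(1) by blast
    then show ?thesis
    proof
      assume Sy: "S y = {v}"
      then have "card (S y) = 1" by simp
      then have H unfolding H_def using y(1) by blast
      then have w0: "ws ! 0 = None" using h0 by simp
      then have mpos: "0 < m" using Some by (cases m) auto
      define xs' where "xs' = xs @ [y]"
      have "cyc S ws xs'"
        unfolding cyc_def
      proof (intro conjI allI impI)
        show "length ws = length xs'" unfolding xs'_def using lw lm by simp
        show "xs' \<noteq> []" unfolding xs'_def by simp
        show "length xs' = 1 \<Longrightarrow> ws = [None]" unfolding xs'_def using lm mpos by simp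
        show "distinct ws" by (rule dw)
        show "distinct xs'" unfolding xs'_def using dx ynot by simp
        show "ws ! j \<noteq> None" if "0 < j \<and> j < length ws" for j using nN that by blast
        show "S (xs' ! j) = sv (ws ! j) \<union> sv (ws ! (Suc j mod length xs'))" if j: "j < length xs'" for j
        proof (cases "j < m")
          case True
          then have "xs' ! j = xs ! j" unfolding xs'_def using lm by (simp add: nth_append)
          moreover have "Suc j mod length xs' = Suc j" unfolding xs'_def using True lm by simp
          ultimately show ?thesis using Sx True lm by simp
        next
          case False
          then have jm: "j = m" using j lm unfolding xs'_def by simp
          then have "xs' ! j = y" unfolding xs'_def using lm by (simp add: nth_append)
          moreover have "Suc j mod length xs' = 0" unfolding xs'_def using jm lm by simp
          ultimately show ?thesis using Sy Some w0 jm by simp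
        qed
      qed
      moreover have "set xs' \<subseteq> Lb" unfolding xs'_def using sxL y(1) by simp
      ultimately show ?thesis using wV by blast
    next
      assume "\<exists>u. u \<noteq> v \<and> S y = {v, u}"
      then obtain u where u: "u \<noteq> v" "S y = {v, u}" by blast
      have uV: "u \<in> V" using LS y(1) u(2) by blast
      show ?thesis
      proof (cases "Some u \<in> set ws")
        case True
        then obtain i where i: "i < length ws" "ws ! i = Some u" by (metis in_set_conv_nth)
        have im: "i < m" using i lw Some u(1) by (metis less_SucE option.inject)
        define ws' where "ws' = drop i ws"
        define xs' where "xs' = drop i xs @ [y]"
        have lws': "length ws' = Suc m - i" unfolding ws'_def using lw by simp
        have lxs': "length xs' = Suc m - i" unfolding xs'_def using lm im by simp
        have "cyc S ws' xs'"
          unfolding cyc_def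
        proof (intro conjI allI impI)
          show "length ws' = length xs'" using lws' lxs' by simp
          show "xs' \<noteq> []" unfolding xs'_def by simp
          show "length xs' = 1 \<Longrightarrow> ws' = [None]" using lxs' im by simp
          show "distinct ws'" unfolding ws'_def using dw by simp
          have "y \<notin> set (drop i xs)" using ynot in_set_dropD by metis
          then show "distinct xs'" unfolding xs'_def using dx by simp
          show "ws' ! j \<noteq> None" if jj: "0 < j \<and> j < length ws'" for j
          proof -
            have "ws' ! j = ws ! (i + j)" unfolding ws'_def using lw im by simp
            moreover have "0 < i + j \<and> i + j < length ws" using jj lws' lw im by linarith
            ultimately show ?thesis using nN by simp
          qed
          show "S (xs' ! j) = sv (ws' ! j) \<union> sv (ws' ! (Suc j mod length xs'))" if j: "j < length xs'" for j
          proof (cases "j < m - i")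
            case True
            then have "xs' ! j = xs ! (i + j)" unfolding xs'_def using lm im by (simp add: nth_append)
            moreover have "Suc j mod length xs' = Suc j" using True lxs' im by simp
            moreover have "ws' ! j = ws ! (i + j)" unfolding ws'_def using lw True im by simp
            moreover have "ws' ! Suc j = ws ! Suc (i + j)" unfolding ws'_def using lw True im by simp
            moreover have "i + j < length xs" using True lm by simp
            ultimately show ?thesis using Sx by simp
          next
            case False
            then have jm: "j = m - i" using j lxs' im by simp
            then have "xs' ! j = y" unfolding xs'_def using lm im by (simp add: nth_append)
            moreover have "Suc j mod length xs' = 0" using jm lxs' im by (simp add: Suc_diff_le)
            moreover have "ws' ! j = Some v" unfolding ws'_def using jm lw im Some by simp
            moreover have "ws' ! 0 = Some u" unfolding ws'_def using i by simp
            ultimately show ?thesis using u(2) by auto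
          qed
        qed
        moreover have "set xs' \<subseteq> Lb" unfolding xs'_def using sxL y(1) by (auto dest: in_set_dropD)
        moreover have "\<forall>v. Some v \<in> set ws' \<longrightarrow> v \<in> V" unfolding ws'_def using wV by (auto dest: in_set_dropD)
        ultimately show ?thesis by blast
      next
        case False
        define ws' where "ws' = ws @ [Some u]"
        define xs' where "xs' = xs @ [y]"
        have "pth S V Lb H ws' xs'"
          unfolding pth_def
        proof (intro conjI allI impI)
          show "length ws' = Suc (length xs')" unfolding ws'_def xs'_def using lw lm by simp
          show "distinct ws'" unfolding ws'_def using dw False by simp
          show "distinct xs'" unfolding xs'_def using dx ynot by simp
          show "set xs' \<subseteq> Lb" unfolding xs'_def using sxL y(1) by simp
          show "w \<in> V" if "Some w \<in> set ws'" for w using that wV uV unfolding ws'_def by auto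
          show "ws' ! j \<noteq> None" if "0 < j \<and> j < length ws'" for j
          proof (cases "j < length ws")
            case True then show ?thesis using nN that unfolding ws'_def by (simp add: nth_append)
          next
            case False then have "j = length ws" using that unfolding ws'_def by simp
            then show ?thesis unfolding ws'_def by simp
          qed
          show "S (xs' ! j) = sv (ws' ! j) \<union> sv (ws' ! Suc j)" if j: "j < length xs'" for j
          proof (cases "j < m")
            case True
            then have "xs' ! j = xs ! j" unfolding xs'_def using lm by (simp add: nth_append)
            moreover have "ws' ! j = ws ! j" unfolding ws'_def using lw True by (simp add: nth_append)
            moreover have "ws' ! Suc j = ws ! Suc j" unfolding ws'_def using lw True by (simp add: nth_append)
            ultimately show ?thesis using Sx True lm by simp
          next
            case False
            then have jm: "j = m" using j lm unfolding xs'_def by simp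
            then have "xs' ! j = y" unfolding xs'_def using lm by (simp add: nth_append)
            moreover have "ws' ! j = Some v" unfolding ws'_def using jm lw Some by (simp add: nth_append)
            moreover have "ws' ! Suc j = Some u" unfolding ws'_def using jm lw by (simp add: nth_append)
            ultimately show ?thesis using u(2) by auto
          qed
          show "ws' ! 0 = None \<longleftrightarrow> H" unfolding ws'_def using h0 lw by (simp add: nth_append)
        qed
        moreover have "length xs' = Suc m" unfolding xs'_def using lm by simp
        ultimately show ?thesis using nolonger by blast
      qed
    qed
  qed
qed

lemma struct_exists:
  assumes "finite V"
  shows "\<forall>Lb. finite Lb \<longrightarrow> (\<forall>x\<in>Lb. S x \<subseteq> V \<and> card (S x) \<le> 2) \<longrightarrow> card V < card Lb \<longrightarrow>
     (\<exists>ws xs. cyc S ws xs \<and> set xs \<subseteq> Lb \<and> (\<forall>v. Some v \<in> set ws \<longrightarrow> v \<in> V))"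
  using assms
proof (induction V rule: finite_remove_induct)
  case empty
  show ?case
  proof (intro allI impI)
    fix Lb :: "nat set"
    assume "finite Lb" "\<forall>x\<in>Lb. S x \<subseteq> {} \<and> card (S x) \<le> 2" "card {} < card Lb"
    then obtain x where x: "x \<in> Lb" "S x = {}" by fastforce
    then show "\<exists>ws xs. cyc S ws xs \<and> set xs \<subseteq> Lb \<and> (\<forall>v. Some v \<in> set ws \<longrightarrow> v \<in> {})"
      using cyc_single[of S x] by (intro exI[of _ "[None]"] exI[of _ "[x]"]) simp
  qed
next
  case (remove A)
  show ?case
  proof (intro allI impI)
    fix Lb :: "nat set"
    assume fL: "finite Lb" and LS: "\<forall>x\<in>Lb. S x \<subseteq> A \<and> card (S x) \<le> 2" and cL: "card A < card Lb"
    show "\<exists>ws xs. cyc S ws xs \<and> set xs \<subseteq> Lb \<and> (\<forall>v. Some v \<in> set ws \<longrightarrow> v \<in> A)"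
    proof (cases "\<exists>x\<in>Lb. S x = {}")
      case True
      then obtain x where x: "x \<in> Lb" "S x = {}" by blast
      then show ?thesis
        using cyc_single[of S x] by (intro exI[of _ "[None]"] exI[of _ "[x]"]) simp
    next
      case nonempty: False
      show ?thesis
      proof (cases "\<forall>v\<in>A. \<exists>x y. x \<in> Lb \<and> y \<in> Lb \<and> x \<noteq> y \<and> v \<in> S x \<and> v \<in> S y")
        case True
        have LS': "\<forall>x\<in>Lb. S x \<subseteq> A \<and> S x \<noteq> {} \<and> card (S x) \<le> 2" using LS nonempty by blast
        have "Lb \<noteq> {}" using cL by auto
        then show ?thesis using maxpath_struct[OF remove(1) LS' _ True] by blast
      next
        case False
        then obtain v where v: "v \<in> A" "\<not> (\<exists>x y. x \<in> Lb \<and> y \<in> Lb \<and> x \<noteq> y \<and> v \<in> S x \<and> v \<in> S y)"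
          by blast
        define Lv where "Lv = {x\<in>Lb. v \<in> S x}"
        define Lb' where "Lb' = {x\<in>Lb. v \<notin> S x}"
        have fLv: "finite Lv" unfolding Lv_def using fL by simp
        have fLb': "finite Lb'" unfolding Lb'_def using fL by simp
        have "card Lv \<le> Suc 0"
          using card_le_Suc0_iff_eq[OF fLv] v(2) unfolding Lv_def by blast
        moreover have "card Lb = card Lb' + card Lv"
        proof -
          have "Lb = Lb' \<union> Lv" unfolding Lb'_def Lv_def by blast
          moreover have "Lb' \<inter> Lv = {}" unfolding Lb'_def Lv_def by blast
          ultimately show ?thesis using card_Un_disjoint[OF fLb' fLv] by simp
        qed
        moreover have "card (A - {v}) = card A - 1" using v(1) remove(1) by (simp add: card_Diff_singleton)
        moreover have "card A > 0" using v(1) remove(1) card_gt_0_iff by blast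
        ultimately have c1: "card (A - {v}) < card Lb'"
          using cL by linarith
        have LS'': "\<forall>x\<in>Lb'. S x \<subseteq> A - {v} \<and> card (S x) \<le> 2"
          using LS unfolding Lb'_def by blast
        have "\<exists>ws xs. cyc S ws xs \<and> set xs \<subseteq> Lb' \<and> (\<forall>u. Some u \<in> set ws \<longrightarrow> u \<in> A - {v})"
          using remove(4)[OF v(1)] fLb' LS'' c1 by blast
        then show ?thesis unfolding Lb'_def by blast
      qed
    qed
  qed
qed

lemma color_exists:
  assumes fU: "finite U" and FU: "F \<subseteq> U" and RF: "RF \<subseteq> F"
    and A1: "A1 \<subseteq> U - F" and A2: "A2 \<subseteq> U - F"
    and e1: "even (card A1)" and e2: "even (card A2)"
    and b1: "2 * card RF \<le> card F + 2" and b2: "card F \<le> 2 * card RF + 2"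
    and E3: "card (U - F - A1 - A2) \<ge> 3" and eU: "even (card U)"
  shows "\<exists>R \<subseteq> U. R \<inter> F = RF \<and> 2 * card (R \<inter> A1) = card A1 \<and> 2 * card (R \<inter> A2) = card A2
            \<and> 2 * card R = card U"
proof -
  define Ov where "Ov = A1 \<inter> A2"
  define D1 where "D1 = A1 - Ov"
  define D2 where "D2 = A2 - Ov"
  define E where "E = U - F - A1 - A2"
  have fF: "finite F" using fU FU finite_subset by blast
  have fA1: "finite A1" using fU A1 finite_subset by blast
  have fA2: "finite A2" using fU A2 finite_subset by blast
  have fO: "finite Ov" unfolding Ov_def using fA1 by simp
  have fD1: "finite D1" unfolding D1_def using fA1 by simp
  have fD2: "finite D2" unfolding D2_def using fA2 by simp
  have fE: "finite E" unfolding E_def using fU by simp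
  have fRF: "finite RF" using fF RF finite_subset by blast
  obtain a1 where a1: "card A1 = 2 * a1" using e1 by (elim evenE)
  obtain a2 where a2: "card A2 = 2 * a2" using e2 by (elim evenE)
  obtain u where u: "card U = 2 * u" using eU by (elim evenE)
  define t where "t = card Ov div 2"
  have cA1: "card A1 = card Ov + card D1"
  proof -
    have "A1 = Ov \<union> D1" "Ov \<inter> D1 = {}" unfolding Ov_def D1_def by blast+
    then show ?thesis using card_Un_disjoint[OF fO fD1] by simp
  qed
  have cA2: "card A2 = card Ov + card D2"
  proof -
    have "A2 = Ov \<union> D2" "Ov \<inter> D2 = {}" unfolding Ov_def D2_def by blast+
    then show ?thesis using card_Un_disjoint[OF fO fD2] by simp
  qed
  have cU: "card U = card F + card Ov + card D1 + card D2 + card E"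
  proof -
    have "U = F \<union> (Ov \<union> (D1 \<union> (D2 \<union> E)))" unfolding E_def Ov_def D1_def D2_def using FU A1 A2 by blast
    moreover have "card (F \<union> (Ov \<union> (D1 \<union> (D2 \<union> E)))) = card F + (card Ov + (card D1 + (card D2 + card E)))"
    proof -
      have d1: "D2 \<inter> E = {}" unfolding D2_def E_def by blast
      have d2: "D1 \<inter> (D2 \<union> E) = {}" unfolding D1_def D2_def E_def Ov_def by blast
      have d3: "Ov \<inter> (D1 \<union> (D2 \<union> E)) = {}" unfolding D1_def D2_def E_def Ov_def by blast
      have d4: "F \<inter> (Ov \<union> (D1 \<union> (D2 \<union> E))) = {}" unfolding D1_def D2_def E_def Ov_def using A1 A2 by blast
      show ?thesis
        using card_Un_disjoint[OF fD2 fE d1] card_Un_disjoint[OF fD1 _ d2] card_Un_disjoint[OF fO _ d3]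
          card_Un_disjoint[OF fF _ d4] fD2 fE fD1 fO by simp
    qed
    ultimately show ?thesis by simp
  qed
  have cE: "card E \<ge> 3" using E3 unfolding E_def .
  have t1: "2 * t \<le> card Ov" "card Ov \<le> 2 * t + 1" unfolding t_def by simp_all
  define r1 where "r1 = a1 - t"
  define r2 where "r2 = a2 - t"
  define rE where "rE = u - (card RF + t + r1 + r2)"
  have r1le: "r1 \<le> card D1" unfolding r1_def using cA1 a1 t1 by linarith
  have r2le: "r2 \<le> card D2" unfolding r2_def using cA2 a2 t1 by linarith
  have tle: "t \<le> card Ov" using t1 by linarith
  have ta1: "t \<le> a1" using cA1 a1 t1 by linarith
  have ta2: "t \<le> a2" using cA2 a2 t1 by linarith
  have rEsum: "card RF + t + r1 + r2 + rE = u"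
    unfolding rE_def r1_def r2_def using cU u a1 a2 cA1 cA2 t1 b1 b2 cE ta1 ta2 by linarith
  have rEle: "rE \<le> card E"
    unfolding rE_def r1_def r2_def using cU u a1 a2 cA1 cA2 t1 b1 b2 cE ta1 ta2 by linarith
  obtain RO where RO: "RO \<subseteq> Ov" "card RO = t" "finite RO" using obtain_subset_with_card_n[OF tle] by blast
  obtain R1 where R1: "R1 \<subseteq> D1" "card R1 = r1" "finite R1" using obtain_subset_with_card_n[OF r1le] by blast
  obtain R2 where R2: "R2 \<subseteq> D2" "card R2 = r2" "finite R2" using obtain_subset_with_card_n[OF r2le] by blast
  obtain RE where RE: "RE \<subseteq> E" "card RE = rE" "finite RE" using obtain_subset_with_card_n[OF rEle] by blast
  define R where "R = RF \<union> (RO \<union> (R1 \<union> (R2 \<union> RE)))"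
  have "R \<subseteq> U" unfolding R_def using RF FU RO(1) R1(1) R2(1) RE(1) A1 A2
    unfolding Ov_def D1_def D2_def E_def by blast
  moreover have "R \<inter> F = RF" unfolding R_def using RF RO(1) R1(1) R2(1) RE(1) A1 A2
    unfolding Ov_def D1_def D2_def E_def by blast
  moreover have "2 * card (R \<inter> A1) = card A1"
  proof -
    have "R \<inter> A1 = RO \<union> R1" unfolding R_def using RF RO(1) R1(1) R2(1) RE(1) A1 A2
      unfolding Ov_def D1_def D2_def E_def by blast
    moreover have "RO \<inter> R1 = {}" using RO(1) R1(1) unfolding Ov_def D1_def by blast
    ultimately have "card (R \<inter> A1) = t + r1" using card_Un_disjoint[OF RO(3) R1(3)] RO(2) R1(2) by simp
    then show ?thesis using a1 ta1 unfolding r1_def by simp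
  qed
  moreover have "2 * card (R \<inter> A2) = card A2"
  proof -
    have "R \<inter> A2 = RO \<union> R2" unfolding R_def using RF RO(1) R1(1) R2(1) RE(1) A1 A2
      unfolding Ov_def D1_def D2_def E_def by blast
    moreover have "RO \<inter> R2 = {}" using RO(1) R2(1) unfolding Ov_def D2_def by blast
    ultimately have "card (R \<inter> A2) = t + r2" using card_Un_disjoint[OF RO(3) R2(3)] RO(2) R2(2) by simp
    then show ?thesis using a2 ta2 unfolding r2_def by simp
  qed
  moreover have "2 * card R = card U"
  proof -
    have d1: "R2 \<inter> RE = {}" using R2(1) RE(1) unfolding D2_def E_def by blast
    have d2: "R1 \<inter> (R2 \<union> RE) = {}" using R1(1) R2(1) RE(1) unfolding D1_def D2_def E_def Ov_def by blast
    have d3: "RO \<inter> (R1 \<union> (R2 \<union> RE)) = {}" using RO(1) R1(1) R2(1) RE(1) unfolding D1_def D2_def E_def Ov_def by blast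
    have d4: "RF \<inter> (RO \<union> (R1 \<union> (R2 \<union> RE))) = {}" using RF RO(1) R1(1) R2(1) RE(1) A1 A2 unfolding D1_def D2_def E_def Ov_def by blast
    have "card R = card RF + (card RO + (card R1 + (card R2 + card RE)))"
      unfolding R_def
      using card_Un_disjoint[OF R2(3) RE(3) d1] card_Un_disjoint[OF R1(3) _ d2] card_Un_disjoint[OF RO(3) _ d3]
          card_Un_disjoint[OF fRF _ d4] R2(3) RE(3) R1(3) RO(3) by simp
    then show ?thesis using RO(2) R1(2) R2(2) RE(2) rEsum u by simp
  qed
  ultimately show ?thesis by blast
qed

lemma card_odd_below: "card {i. i < L \<and> odd i} = L div 2"
proof (induction L)
  case 0 then show ?case by simp
next
  case (Suc L)
  show ?case
  proof (cases "odd L")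
    case True
    have "{i. i < Suc L \<and> odd i} = insert L {i. i < L \<and> odd i}" using True by (auto simp: less_Suc_eq)
    then have "card {i. i < Suc L \<and> odd i} = Suc (card {i. i < L \<and> odd i})" by simp
    then show ?thesis using Suc True by simp
  next
    case False
    have "{i. i < Suc L \<and> odd i} = {i. i < L \<and> odd i}" using False by (auto simp: less_Suc_eq)
    then show ?thesis using Suc False by simp
  qed
qed

lemma card_two_part:
  assumes "finite Q" "Q \<inter> F = {a, b}" "a \<noteq> b"
  shows "card {x\<in>Q. P x} = card {x\<in>Q - F. P x} + (if P a then 1 else 0) + (if P b then 1 else 0)"
proof -
  have fQ: "finite {x\<in>Q - F. P x}" using assms(1) by simp
  have e: "{x\<in>Q. P x} = {x\<in>Q - F. P x} \<union> {x\<in>{a,b}. P x}" using assms(2) by blast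
  have d: "{x\<in>Q - F. P x} \<inter> {x\<in>{a,b}. P x} = {}" using assms(2) by blast
  have c2: "card {x\<in>{a,b}. P x} = (if P a then 1 else 0) + (if P b then 1 else 0)"
  proof (cases "P a")
    case True
    show ?thesis
    proof (cases "P b")
      case True
      have "{x\<in>{a,b}. P x} = {a, b}" using \<open>P a\<close> True by blast
      then show ?thesis using assms(3) \<open>P a\<close> True by simp
    next
      case False
      have "{x\<in>{a,b}. P x} = {a}" using \<open>P a\<close> False by blast
      then show ?thesis using \<open>P a\<close> False by simp
    qed
  next
    case False
    show ?thesis
    proof (cases "P b")
      case True
      have "{x\<in>{a,b}. P x} = {b}" using \<open>\<not> P a\<close> True by blast
      then show ?thesis using \<open>\<not> P a\<close> True by simp
    next
      case False
      have "{x\<in>{a,b}. P x} = {}" using \<open>\<not> P a\<close> False by blast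
      then show ?thesis using \<open>\<not> P a\<close> False by simp
    qed
  qed
  show ?thesis unfolding e using card_Un_disjoint[OF fQ _ d] c2 by simp
qed

lemma suc_mod_prev:
  assumes "i < L" "j < (L::nat)"
  shows "Suc i mod L = j \<longleftrightarrow> i = (if j = 0 then L - 1 else j - 1)"
proof (cases "Suc i < L")
  case True
  then have "Suc i mod L = Suc i" by simp
  then show ?thesis using True by auto
next
  case False
  then have si: "Suc i = L" using assms(1) by simp
  then have "Suc i mod L = 0" by simp
  then show ?thesis using si assms(2) by auto
qed

lemma flip_fail:
  assumes vq: "valid_queries k n qs" and ek: "even k" and k2: "k \<ge> 2" and en: "even n"
    and cy: "cyc (tau qs) ws xs" and xsn: "set xs \<subseteq> {1..n}"
    and wsq: "\<forall>v. Some v \<in> set ws \<longrightarrow> v < length qs"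
    and big: "length xs + 2 * k \<le> n"
  shows "\<not> succeeds n qs"
proof -
  define L where "L = length xs"
  have lw: "length ws = L" and Lpos: "L > 0" and L1: "L = 1 \<longrightarrow> ws = [None]"
    and dw: "distinct ws" and dx: "distinct xs"
    and Sx: "\<forall>j<L. tau qs (xs ! j) = sv (ws ! j) \<union> sv (ws ! (Suc j mod L))"
    using cy unfolding cyc_def L_def by auto
  define F where "F = set xs"
  have cF: "card F = L" unfolding F_def L_def using distinct_card[OF dx] .
  have fF: "finite F" unfolding F_def by simp
  have Fn: "F \<subseteq> {1..n}" unfolding F_def using xsn .
  define prev where "prev j = (if j = 0 then L - 1 else j - 1)" for j
  have prevL: "prev j < L" if "j < L" for j unfolding prev_def using that Lpos by auto
  have Qsub: "qs ! v \<subseteq> {1..n}" "card (qs ! v) = k" "finite (qs ! v)" if "v < length qs" for v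
  proof -
    have "qs ! v \<in> set qs" using that by simp
    then show "qs ! v \<subseteq> {1..n}" "card (qs ! v) = k" using vq unfolding valid_queries_def by blast+
    then show "finite (qs ! v)" using finite_subset by blast
  qed
  have mem_tau: "xs ! i \<in> qs ! v \<longleftrightarrow> (ws ! i = Some v \<or> ws ! (Suc i mod L) = Some v)"
    if "i < L" "v < length qs" for i v
  proof -
    have "xs ! i \<in> qs ! v \<longleftrightarrow> v \<in> tau qs (xs ! i)" unfolding tau_def using that(2) by simp
    also have "\<dots> \<longleftrightarrow> v \<in> sv (ws ! i) \<union> sv (ws ! (Suc i mod L))" using Sx that(1) by simp
    also have "\<dots> \<longleftrightarrow> (ws ! i = Some v \<or> ws ! (Suc i mod L) = Some v)" by (simp add: sv_mem)
    finally show ?thesis .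
  qed
  have vert: "xs ! i \<in> qs ! v \<longleftrightarrow> (i = j \<or> i = prev j)"
    if j: "j < L" "ws ! j = Some v" and i: "i < L" for i j v
  proof -
    have "Some v \<in> set ws" using j lw by (metis nth_mem)
    then have vq': "v < length qs" using wsq by blast
    have si: "Suc i mod L < L" using Lpos by simp
    have e1: "ws ! i = Some v \<longleftrightarrow> i = j" using nth_eq_iff_index_eq[OF dw] i j lw by metis
    have e2: "ws ! (Suc i mod L) = Some v \<longleftrightarrow> Suc i mod L = j" using nth_eq_iff_index_eq[OF dw] si j lw by metis
    show ?thesis using mem_tau[OF i vq'] e1 e2 suc_mod_prev[OF i j(1)] unfolding prev_def by simp
  qed
  have nonvert: "xs ! i \<notin> qs ! v" if "v < length qs" "Some v \<notin> set ws" "i < L" for i v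
  proof
    assume "xs ! i \<in> qs ! v"
    then have "ws ! i = Some v \<or> ws ! (Suc i mod L) = Some v" using mem_tau that by blast
    moreover have "i < length ws" "Suc i mod L < length ws" using that(3) lw Lpos by simp_all
    ultimately have "Some v \<in> set ws" by (metis nth_mem)
    then show False using that(2) by simp
  qed
  have vertF: "qs ! v \<inter> F = {xs ! j, xs ! prev j} \<and> xs ! j \<noteq> xs ! prev j"
    if j: "j < L" "ws ! j = Some v" for j v
  proof
    show "qs ! v \<inter> F = {xs ! j, xs ! prev j}"
    proof
      show "qs ! v \<inter> F \<subseteq> {xs ! j, xs ! prev j}"
      proof
        fix x assume x: "x \<in> qs ! v \<inter> F"
        then obtain i where i: "i < L" "x = xs ! i" unfolding F_def L_def by (metis IntD2 in_set_conv_nth)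
        then have "i = j \<or> i = prev j" using vert[OF j i(1)] x by blast
        then show "x \<in> {xs ! j, xs ! prev j}" using i by blast
      qed
      show "{xs ! j, xs ! prev j} \<subseteq> qs ! v \<inter> F"
        using vert[OF j] j(1) prevL[OF j(1)] unfolding F_def L_def by simp
    qed
    have "L \<noteq> 1"
    proof
      assume "L = 1"
      then have "ws = [None]" using L1 by simp
      then show False using j \<open>L = 1\<close> by simp
    qed
    then have "prev j \<noteq> j" unfolding prev_def using j(1) Lpos by auto
    then show "xs ! j \<noteq> xs ! prev j"
      using nth_eq_iff_index_eq[OF dx] j(1) prevL[OF j(1)] unfolding L_def by metis
  qed
  have vertcard: "card (qs ! v - F) = k - 2" if j: "j < L" "ws ! j = Some v" for j v
  proof -
    have "Some v \<in> set ws" using j lw by (metis nth_mem)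
    then have vq': "v < length qs" using wsq by blast
    have "card (qs ! v - F) = card (qs ! v) - card (qs ! v \<inter> F)"
      using card_Diff_subset_Int Qsub(3)[OF vq'] fF by (metis Int_commute card_Diff_subset_Int finite_Int)
    moreover have "card (qs ! v \<inter> F) = 2" using vertF[OF j] by simp
    ultimately show ?thesis using Qsub(2)[OF vq'] by simp
  qed
  define isred where "isred i = (odd i \<or> (even L \<and> i = 0))" for i :: nat
  define RF where "RF = (\<lambda>i. xs ! i) ` {i. i < L \<and> isred i}"
  have RFF: "RF \<subseteq> F" unfolding RF_def F_def L_def by auto
  have memRF: "xs ! i \<in> RF \<longleftrightarrow> isred i" if "i < L" for i
  proof
    assume "xs ! i \<in> RF"
    then obtain i' where i': "i' < L" "isred i'" "xs ! i = xs ! i'" unfolding RF_def by blast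
    then have "i = i'" using nth_eq_iff_index_eq[OF dx] that unfolding L_def by metis
    then show "isred i" using i' by simp
  next
    assume "isred i"
    then show "xs ! i \<in> RF" unfolding RF_def using that by blast
  qed
  have cRF: "card RF = (if even L then L div 2 + 1 else L div 2)"
  proof -
    have inj: "inj_on (\<lambda>i. xs ! i) {i. i < L \<and> isred i}"
      using inj_on_nth[OF dx] unfolding L_def by (metis (no_types, lifting) mem_Collect_eq)
    have c1: "card RF = card {i. i < L \<and> isred i}" unfolding RF_def using card_image[OF inj] .
    show ?thesis
    proof (cases "even L")
      case True
      have "{i. i < L \<and> isred i} = insert 0 {i. i < L \<and> odd i}"
        unfolding isred_def using True Lpos by auto
      moreover have "0 \<notin> {i. i < L \<and> odd (i::nat)}" by simp
      ultimately have "card {i. i < L \<and> isred i} = Suc (L div 2)"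
        using card_odd_below[of L] by simp
      then show ?thesis using c1 True by simp
    next
      case False
      have "{i. i < L \<and> isred i} = {i. i < L \<and> odd i}" unfolding isred_def using False by auto
      then show ?thesis using c1 False card_odd_below[of L] by simp
    qed
  qed
  define A1 where "A1 = (case ws ! 0 of None \<Rightarrow> {} | Some v \<Rightarrow> qs ! v - F)"
  define A2 where "A2 = (if even L then (case ws ! 1 of None \<Rightarrow> {} | Some v \<Rightarrow> qs ! v - F) else {})"
  have A1p: "A1 \<subseteq> {1..n} - F \<and> even (card A1) \<and> card A1 \<le> k - 2"
  proof (cases "ws ! 0")
    case None then show ?thesis unfolding A1_def by simp
  next
    case (Some v)
    have "Some v \<in> set ws" using Some lw Lpos by (metis nth_mem)
    then have vq': "v < length qs" using wsq by blast
    have "card A1 = k - 2" unfolding A1_def using Some vertcard[OF Lpos Some] by simp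
    moreover have "A1 \<subseteq> {1..n} - F" unfolding A1_def using Some Qsub(1)[OF vq'] by auto
    ultimately show ?thesis using ek k2 by simp
  qed
  have A2p: "A2 \<subseteq> {1..n} - F \<and> even (card A2) \<and> card A2 \<le> k - 2"
  proof (cases "even L")
    case False then show ?thesis unfolding A2_def by simp
  next
    case True
    then have L2: "1 < L" using Lpos by (metis One_nat_def even_Suc_Suc_iff le_eq_less_or_eq less_one not_less odd_one)
    show ?thesis
    proof (cases "ws ! 1")
      case None then show ?thesis unfolding A2_def using True by simp
    next
      case (Some v)
      have "Some v \<in> set ws" using Some lw L2 by (metis nth_mem)
      then have vq': "v < length qs" using wsq by blast
      have "card A2 = k - 2" unfolding A2_def using True Some vertcard[OF L2 Some] by simp
      moreover have "A2 \<subseteq> {1..n} - F" unfolding A2_def using True Some Qsub(1)[OF vq'] by auto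
      ultimately show ?thesis using ek k2 by simp
    qed
  qed
  have E3: "card ({1..n} - F - A1 - A2) \<ge> 3"
  proof -
    have "card ({1..n} - F - A1 - A2) \<ge> card ({1..n} - F - A1) - card A2" by (rule diff_card_le_card_Diff) (meson A2p finite_Diff finite_atLeastAtMost finite_subset)
    moreover have "card ({1..n} - F - A1) \<ge> card ({1..n} - F) - card A1" by (rule diff_card_le_card_Diff) (meson A1p finite_Diff finite_atLeastAtMost finite_subset)
    moreover have "card ({1..n} - F) = n - L" using card_Diff_subset[OF fF Fn] cF by simp
    ultimately show ?thesis using A1p A2p big k2 unfolding L_def by linarith
  qed
  have b1: "2 * card RF \<le> card F + 2" and b2: "card F \<le> 2 * card RF + 2"
    using cRF cF by (cases "even L"; simp; presburger)+
  obtain R where R: "R \<subseteq> {1..n}" "R \<inter> F = RF" "2 * card (R \<inter> A1) = card A1"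
    "2 * card (R \<inter> A2) = card A2" "2 * card R = card {1..n}"
    using color_exists[of "{1..n}" F RF A1 A2] Fn RFF A1p A2p b1 b2 E3 en by auto
  define c where "c x = (x \<in> R)" for x
  define c' where "c' x = (if x \<in> F then \<not> c x else c x)" for x
  have bal: "2 * card {j\<in>{1..n}. c j} = n"
  proof -
    have "{j\<in>{1..n}. c j} = R" unfolding c_def using R(1) by blast
    then show ?thesis using R(5) by simp
  qed
  have cxs: "c (xs ! i) = isred i" if "i < L" for i
  proof -
    have "xs ! i \<in> F" unfolding F_def L_def using that L_def by simp
    then have "xs ! i \<in> R \<longleftrightarrow> xs ! i \<in> RF" using R(2) by blast
    then show ?thesis unfolding c_def using memRF[OF that] by simp
  qed
  have cons: "consistent qs c c'"
    unfolding consistent_def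
  proof
    fix Q assume "Q \<in> set qs"
    then obtain v where v: "v < length qs" "Q = qs ! v" by (metis in_set_conv_nth)
    have fQ: "finite Q" and cQ: "card Q = k" using Qsub[OF v(1)] v(2) by simp_all
    have sameQF: "{x\<in>Q - F. c' x} = {x\<in>Q - F. c x}" unfolding c'_def by auto
    show "cm_answer c' Q = cm_answer c Q"
    proof (cases "Some v \<in> set ws")
      case False
      have "Q \<inter> F = {}"
      proof (rule ccontr)
        assume "Q \<inter> F \<noteq> {}"
        then obtain x where "x \<in> Q" "x \<in> F" by blast
        then obtain i where "i < L" "x = xs ! i" unfolding F_def L_def by (metis in_set_conv_nth)
        then show False using nonvert[OF v(1) False] \<open>x \<in> Q\<close> v(2) by blast
      qed
      then have "{x\<in>Q. c' x} = {x\<in>Q. c x}" unfolding c'_def by auto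
      then show ?thesis by (intro cm_answer_same[OF fQ]) simp
    next
      case True
      then obtain j where j: "j < L" "ws ! j = Some v" using lw by (metis in_set_conv_nth)
      define a where "a = xs ! j"
      define b where "b = xs ! prev j"
      have QF: "Q \<inter> F = {a, b}" and ab: "a \<noteq> b" using vertF[OF j] v(2) unfolding a_def b_def by simp_all
      have aF: "a \<in> F" and bF: "b \<in> F" using QF by blast+
      have ca: "c a = isred j" unfolding a_def using cxs j(1) by simp
      have cb: "c b = isred (prev j)" unfolding b_def using cxs prevL[OF j(1)] by simp
      have r: "card {x\<in>Q. c x} = card {x\<in>Q - F. c x} + (if c a then 1 else 0) + (if c b then 1 else 0)"
        using card_two_part[OF fQ QF ab] .
      have r': "card {x\<in>Q. c' x} = card {x\<in>Q - F. c x} + (if c a then 0 else 1) + (if c b then 0 else 1)"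
        using card_two_part[OF fQ QF ab, of c'] sameQF aF bF unfolding c'_def by simp
      show ?thesis
      proof (cases "j = 0 \<or> (j = 1 \<and> even L)")
        case True
        have eqc: "c a = c b"
        proof (cases "j = 0")
          case True
          have p: "prev j = L - 1" unfolding prev_def using True by simp
          show ?thesis
          proof (cases "even L")
            case True
            then have "L \<noteq> 1" by auto
            then have "odd (L - 1)" using True Lpos by simp
            then show ?thesis using ca cb p True \<open>j = 0\<close> unfolding isred_def by simp
          next
            case False
            then have "even (L - 1)" using Lpos by simp
            then show ?thesis using ca cb p False \<open>j = 0\<close> unfolding isred_def by simp
          qed
        next
          case False
          then have "j = 1" "even L" using \<open>j = 0 \<or> (j = 1 \<and> even L)\<close> by simp_all
          then show ?thesis using ca cb unfolding isred_def prev_def by simp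
        qed
        have QFA: "2 * card {x\<in>Q - F. c x} = k - 2"
        proof (cases "j = 0")
          case True
          then have "A1 = Q - F" unfolding A1_def using j(2) v(2) by simp
          moreover have "{x\<in>Q - F. c x} = R \<inter> (Q - F)" unfolding c_def by blast
          ultimately show ?thesis using R(3) vertcard[OF j] v(2) by simp
        next
          case False
          then have "j = 1" "even L" using \<open>j = 0 \<or> (j = 1 \<and> even L)\<close> by simp_all
          then have "A2 = Q - F" unfolding A2_def using j(2) v(2) by simp
          moreover have "{x\<in>Q - F. c x} = R \<inter> (Q - F)" unfolding c_def by blast
          ultimately show ?thesis using R(4) vertcard[OF j] v(2) by simp
        qed
        have s2: "2 * card {x\<in>Q - F. c x} + 2 = k" using QFA k2 by linarith
        have "card {x\<in>Q. c' x} + card {x\<in>Q. c x} = card Q"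
        proof (cases "c a")
          case True
          then have "card {x\<in>Q. c' x} = card {x\<in>Q - F. c x}" "card {x\<in>Q. c x} = card {x\<in>Q - F. c x} + 2"
            using r r' eqc by simp_all
          then show ?thesis using s2 cQ by linarith
        next
          case False
          then have "card {x\<in>Q. c' x} = card {x\<in>Q - F. c x} + 2" "card {x\<in>Q. c x} = card {x\<in>Q - F. c x}"
            using r r' eqc by simp_all
          then show ?thesis using s2 cQ by linarith
        qed
        then show ?thesis by (intro cm_answer_same[OF fQ]) simp
      next
        case False
        have neq: "c a \<noteq> c b"
        proof -
          have j1: "j \<ge> 1" using False by simp
          then have p: "prev j = j - 1" unfolding prev_def by simp
          show ?thesis
          proof (cases "j = 1")
            case True
            then have "odd L" using False by simp
            then show ?thesis using ca cb p True unfolding isred_def by simp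
          next
            case False
            then have "j \<ge> 2" using j1 by simp
            then have "odd j \<longleftrightarrow> \<not> odd (j - 1)" by (cases j) simp_all
            then show ?thesis using ca cb p \<open>j \<ge> 2\<close> unfolding isred_def by auto
          qed
        qed
        have "card {x\<in>Q. c' x} = card {x\<in>Q. c x}" using r r' neq by (cases "c a") simp_all
        then show ?thesis by (intro cm_answer_same[OF fQ]) simp
      qed
    qed
  qed
  have redc': "{x\<in>{1..n}. c' x} = (R - F) \<union> (F - RF)"
    unfolding c'_def c_def using R(1,2) Fn RFF by (auto split: if_splits)
  have cRFF: "card (F - RF) = L - card RF" using card_Diff_subset[OF _ RFF] fF cF finite_subset[OF RFF] by simp
  have fR: "finite R" using R(1) finite_subset by blast
  have RFR: "RF \<subseteq> R" using R(2) by blast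
  have fRF: "finite RF" using fR RFR finite_subset by blast
  have cRmF: "card (R - F) = card R - card RF"
  proof -
    have "R - F = R - RF" using R(2) by blast
    then show ?thesis using card_Diff_subset[OF fRF RFR] by simp
  qed
  have RFle: "card RF \<le> card R" using card_mono[OF fR RFR] .
  have RFL: "card RF \<le> L" using card_mono[OF fF RFF] cF by simp
  have cred': "card {x\<in>{1..n}. c' x} + 2 * card RF = card R + L"
  proof -
    have "(R - F) \<inter> (F - RF) = {}" by blast
    moreover have "finite (R - F)" "finite (F - RF)" using fR fF by auto
    ultimately have "card ((R - F) \<union> (F - RF)) = card (R - F) + card (F - RF)"
      using card_Un_disjoint by blast
    then show ?thesis unfolding redc' using cRFF cRmF RFle RFL by linarith
  qed
  have cR: "2 * card R = n" using R(5) by simp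
  have sp: "card {x\<in>{1..n}. c' x} + card {x\<in>{1..n}. \<not> c' x} = n"
    using card_split_filter[of "{1..n}" c'] by simp
  obtain i where "maj_ball n c' i"
  proof (cases "even L")
    case False
    then have "2 * card RF + 1 = L" using cRF by simp
    then have red2: "2 * card {x\<in>{1..n}. c' x} = n + 2" using cred' cR by linarith
    have ne: "{x\<in>{1..n}. c' x} \<noteq> {}"
    proof
      assume h: "{x\<in>{1..n}. c' x} = {}"
      have "card {x\<in>{1..n}. c' x} = 0" by (simp only: h card.empty)
      then show False using red2 by linarith
    qed
    then obtain i where i: "i \<in> {1..n}" "c' i" by blast
    have "{j\<in>{1..n}. c' j = c' i} = {x\<in>{1..n}. c' x}" using i(2) by simp
    then have "maj_ball n c' i" unfolding maj_ball_def using i(1) red2 by simp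
    then show ?thesis using that by blast
  next
    case True
    have "2 * card RF = L + 2" using cRF True by simp
    then have "2 * card {x\<in>{1..n}. c' x} + 4 = n" using cred' cR by linarith
    then have bl: "2 * card {x\<in>{1..n}. \<not> c' x} = n + 4" using sp by linarith
    have ne: "{x\<in>{1..n}. \<not> c' x} \<noteq> {}"
    proof
      assume h: "{x\<in>{1..n}. \<not> c' x} = {}"
      have "card {x\<in>{1..n}. \<not> c' x} = 0" by (simp only: h card.empty)
      then show False using bl by linarith
    qed
    then obtain i where i: "i \<in> {1..n}" "\<not> c' i" by blast
    have "{j\<in>{1..n}. c' j = c' i} = {x\<in>{1..n}. \<not> c' x}" using i(2) by simp
    then have "maj_ball n c' i" unfolding maj_ball_def using i(1) bl by simp
    then show ?thesis using that by blast
  qed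
  then show ?thesis using fail_lemma[OF bal cons] by blast
qed

lemma double_count:
  assumes vq: "valid_queries k n qs"
  shows "(\<Sum>x\<in>{1..n}. card (tau qs x)) = length qs * k"
proof -
  define q where "q = length qs"
  have t: "card (tau qs x) = (\<Sum>j<q. if x \<in> qs ! j then 1 else 0)" for x
  proof -
    have "tau qs x = {j\<in>{..<q}. x \<in> qs ! j}" unfolding tau_def q_def by auto
    then have "card (tau qs x) = (\<Sum>j\<in>{j\<in>{..<q}. x \<in> qs ! j}. 1)" by simp
    also have "\<dots> = (\<Sum>j<q. if x \<in> qs ! j then 1 else 0)" by (rule sum.inter_filter) simp
    finally show ?thesis .
  qed
  have c: "(\<Sum>x\<in>{1..n}. if x \<in> qs ! j then 1 else 0) = k" if "j < q" for j
  proof -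
    have Q: "qs ! j \<subseteq> {1..n}" "card (qs ! j) = k" using vq that unfolding valid_queries_def q_def
      by (metis nth_mem)+
    have "(\<Sum>x\<in>{1..n}. if x \<in> qs ! j then 1 else 0) = (\<Sum>x\<in>{x\<in>{1..n}. x \<in> qs ! j}. 1::nat)"
      by (rule sum.inter_filter[symmetric]) simp
    also have "{x\<in>{1..n}. x \<in> qs ! j} = qs ! j" using Q(1) by blast
    finally show ?thesis using Q(2) by simp
  qed
  have "(\<Sum>x\<in>{1..n}. card (tau qs x)) = (\<Sum>x\<in>{1..n}. \<Sum>j<q. if x \<in> qs ! j then 1 else 0)"
    using t by simp
  also have "\<dots> = (\<Sum>j<q. \<Sum>x\<in>{1..n}. if x \<in> qs ! j then 1 else 0)" by (rule sum.swap)
  also have "\<dots> = (\<Sum>j<q. k)" using c by simp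
  finally show ?thesis unfolding q_def by simp
qed

lemma len_cyc:
  assumes "cyc S ws xs" "\<forall>v. Some v \<in> set ws \<longrightarrow> v < q"
  shows "length xs \<le> q + 1"
proof -
  have "set ws \<subseteq> insert None (Some ` {..<q})"
  proof
    fix w assume w: "w \<in> set ws"
    show "w \<in> insert None (Some ` {..<q})"
    proof (cases w)
      case (Some v) then show ?thesis using assms(2) w by simp
    qed simp
  qed
  then have "card (set ws) \<le> card (insert None (Some ` {..<q}))" by (intro card_mono) auto
  also have "\<dots> \<le> Suc (card (Some ` {..<q}))" by (rule card_insert_le_m1) simp_all
  also have "\<dots> = Suc q" by (simp add: card_image)
  finally have "card (set ws) \<le> Suc q" .
  moreover have "card (set ws) = length ws" using assms(1) unfolding cyc_def by (simp add: distinct_card)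
  ultimately show ?thesis using assms(1) unfolding cyc_def by simp
qed

lemma main_bound:
  assumes vq: "valid_queries k n qs" and succ: "succeeds n qs" and ek: "even k" and en: "even n"
    and kb: "2 ^ 14 \<le> k" and nk: "k \<le> n"
  shows "3 * n \<le> length qs * (k + 2)"
proof -
  define q where "q = length qs"
  define Lb where "Lb = {x\<in>{1..n}. card (tau qs x) \<le> 2}"
  have k2: "k \<ge> 2" using kb by simp
  have n2: "n \<ge> 2" using nk k2 by simp
  have tb: "n \<le> 2 * 2 ^ q + 1" using types_bound[OF en n2 succ] unfolding q_def .
  have q13: "q \<ge> 13" if "n < 4 * k"
  proof (rule ccontr)
    assume "\<not> q \<ge> 13"
    then have "q \<le> 12" by simp
    then have "(2::nat) ^ q \<le> 2 ^ 12" by (rule power_increasing) simp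
    then show False using tb nk kb by simp
  qed
  have fLb: "finite Lb" unfolding Lb_def by simp
  show ?thesis
  proof (cases "(\<exists>x\<in>Lb. tau qs x = {}) \<or> q < card Lb")
    case True
    obtain ws xs where st: "cyc (tau qs) ws xs" "set xs \<subseteq> Lb" "\<forall>v. Some v \<in> set ws \<longrightarrow> v < q"
    proof (cases "\<exists>x\<in>Lb. tau qs x = {}")
      case True
      then obtain x where "x \<in> Lb" "tau qs x = {}" by blast
      then show ?thesis using that[of "[None]" "[x]"] cyc_single[of "tau qs" x] by simp
    next
      case False
      then have "q < card Lb" using \<open>(\<exists>x\<in>Lb. tau qs x = {}) \<or> q < card Lb\<close> by blast
      moreover have "\<forall>x\<in>Lb. tau qs x \<subseteq> {..<q} \<and> card (tau qs x) \<le> 2"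
        unfolding Lb_def q_def using tau_sub by blast
      ultimately show ?thesis
        using struct_exists[of "{..<q}" "tau qs"] fLb that by auto
    qed
    have xsn: "set xs \<subseteq> {1..n}" using st(2) unfolding Lb_def by blast
    have "\<not> (length xs + 2 * k \<le> n)"
      using flip_fail[OF vq ek k2 en st(1) xsn] st(3) succ unfolding q_def by blast
    moreover have "length xs \<le> q + 1" using len_cyc[OF st(1) st(3)] .
    ultimately have qn: "n \<le> q + 2 * k" by linarith
    show ?thesis
    proof (cases "n < 4 * k")
      case True
      have "3 * n \<le> 12 * k" using True by simp
      also have "\<dots> \<le> q * k" using q13[OF True] by simp
      also have "\<dots> \<le> q * (k + 2)" by simp
      finally show ?thesis unfolding q_def by simp
    next
      case False
      then have "2 * q \<ge> n" using qn by linarith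
      then have "2 * q * (k + 2) \<ge> n * (k + 2)" by (rule mult_right_mono) simp
      moreover have "n * (k + 2) \<ge> n * 6" using kb by (intro mult_left_mono) simp_all
      ultimately show ?thesis unfolding q_def by linarith
    qed
  next
    case False
    then have ne: "\<forall>x\<in>Lb. tau qs x \<noteq> {}" and cL: "card Lb \<le> q" by auto
    have ge: "card (tau qs x) \<ge> (if x \<in> Lb then 1 else 3)" if "x \<in> {1..n}" for x
    proof (cases "x \<in> Lb")
      case True
      then have "tau qs x \<noteq> {}" using ne by blast
      moreover have "finite (tau qs x)" using tau_sub finite_subset by blast
      ultimately show ?thesis using True by (simp add: card_gt_0_iff Suc_le_eq)
    next
      case False
      then show ?thesis using that unfolding Lb_def by simp
    qed
    have "(\<Sum>x\<in>{1..n}. (if x \<in> Lb then 1 else 3)) \<le> (\<Sum>x\<in>{1..n}. card (tau qs x))"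
      using ge by (rule sum_mono)
    also have "\<dots> = q * k" using double_count[OF vq] unfolding q_def .
    finally have s1: "(\<Sum>x\<in>{1..n}. (if x \<in> Lb then 1 else 3::nat)) \<le> q * k" .
    have LbS: "Lb \<subseteq> {1..n}" unfolding Lb_def by blast
    have "(\<Sum>x\<in>{1..n}. (if x \<in> Lb then 1 else 3::nat)) = card Lb + 3 * card ({1..n} - Lb)"
    proof -
      have "(\<Sum>x\<in>{1..n}. (if x \<in> Lb then 1 else 3::nat)) = (\<Sum>x\<in>Lb. 1) + (\<Sum>x\<in>{1..n} - Lb. 3)"
        using sum.If_cases[of "{1..n}" "\<lambda>x. x \<in> Lb" "\<lambda>_. 1::nat" "\<lambda>_. 3"] LbS
        by (simp add: Int_absorb1 Diff_eq[symmetric])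
      then show ?thesis by simp
    qed
    moreover have "card ({1..n} - Lb) = n - card Lb" using card_Diff_subset[OF fLb LbS] by simp
    moreover have "card Lb \<le> n" using card_mono[OF _ LbS] by simp
    ultimately have "3 * n \<le> q * k + 2 * card Lb" using s1 by linarith
    then show ?thesis using cL unfolding q_def by (simp add: algebra_simps)
  qed
qed

lemma poly_ineq:
  fixes i k :: real
  assumes "1 \<le> i" "i \<le> k" "2 \<le> k"
  shows "(k + 2) * (5 * i * k - k + i + i ^ 2) \<le> 3 * ((2 * k + 3 + i) * i * k)"
proof -
  have e: "3 * ((2 * k + 3 + i) * i * k) - (k + 2) * (5 * i * k - k + i + i ^ 2)
      = i * k * (k - 2) + 2 * (i * i * (k - 1)) + k * k + 2 * (k - i)"
    by (simp add: algebra_simps power2_eq_square)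
  have "0 \<le> i * k * (k - 2) + 2 * (i * i * (k - 1)) + k * k + 2 * (k - i)"
    using assms by (intro add_nonneg_nonneg mult_nonneg_nonneg) simp_all
  then have "0 \<le> 3 * ((2 * k + 3 + i) * i * k) - (k + 2) * (5 * i * k - k + i + i ^ 2)"
    by (simp only: e)
  then show ?thesis by simp
qed

lemma empty_fails:
  assumes "even n" "0 < n"
  shows "\<not> succeeds n []"
proof -
  define c where "c x = (x \<le> n div 2)" for x :: nat
  have "{j\<in>{1..n}. c j} = {1..n div 2}" unfolding c_def by auto
  then have bal: "2 * card {j\<in>{1..n}. c j} = n" using assms(1) by simp
  have cons: "consistent [] c (\<lambda>_. True)" unfolding consistent_def by simp
  have "{j \<in> {1..n}. True = True} = {1..n}" by auto
  then have "maj_ball n (\<lambda>_. True) 1" unfolding maj_ball_def using assms(2) by simp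
  then show ?thesis using fail_lemma[OF bal cons] by blast
qed

lemma N_inf:
  assumes "even n" "0 < n" "n < k"
  shows "N_CM k n = top"
proof -
  have e: "{qs. valid_queries k n qs \<and> succeeds n qs} = {}"
  proof (rule ccontr)
    assume "{qs. valid_queries k n qs \<and> succeeds n qs} \<noteq> {}"
    then obtain qs where qs: "valid_queries k n qs" "succeeds n qs" by blast
    show False
    proof (cases qs)
      case Nil then show False using qs(2) empty_fails[OF assms(1,2)] by simp
    next
      case (Cons Q rest)
      then have "Q \<subseteq> {1..n}" "card Q = k" using qs(1) unfolding valid_queries_def by simp_all
      then have "k \<le> n" using card_mono[of "{1..n}" Q] by simp
      then show False using assms(3) by simp
    qed
  qed
  show ?thesis unfolding N_CM_def e by simp
qed

lemma N_lower:
  assumes "even k" "even n" "2 ^ 14 \<le> k" "k \<le> n"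
  shows "enat ((3 * n + k + 1) div (k + 2)) \<le> N_CM k n"
    and "3 * real n \<le> real ((3 * n + k + 1) div (k + 2)) * (real k + 2)"
proof -
  define m where "m = (3 * n + k + 1) div (k + 2)"
  show "enat ((3 * n + k + 1) div (k + 2)) \<le> N_CM k n"
    unfolding N_CM_def
  proof (rule INF_greatest)
    fix qs assume "qs \<in> {qs. valid_queries k n qs \<and> succeeds n qs}"
    then have "3 * n \<le> length qs * (k + 2)" using main_bound assms by blast
    then have "3 * n + k + 1 < (length qs + 1) * (k + 2)" by simp
    then have "(3 * n + k + 1) div (k + 2) < length qs + 1" by (rule less_mult_imp_div_less)
    then show "enat ((3 * n + k + 1) div (k + 2)) \<le> enat (length qs)" by simp
  qed
  have "(3 * n + k + 1) mod (k + 2) < k + 2" by simp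
  moreover have "m * (k + 2) + (3 * n + k + 1) mod (k + 2) = 3 * n + k + 1"
    unfolding m_def by (rule div_mult_mod_eq)
  ultimately have "3 * n \<le> m * (k + 2)" by linarith
  then have "real (3 * n) \<le> real (m * (k + 2))" by (rule of_nat_mono)
  then show "3 * real n \<le> real ((3 * n + k + 1) div (k + 2)) * (real k + 2)"
    unfolding m_def by (simp add: algebra_simps)
qed

lemma part1:
  assumes k0: "2 ^ 14 < k" and ek: "even k" and en: "even n" and ki: "k < 2 * i" and ik: "i < k"
  shows "ereal ((real n * (5 * real i * real k - real k + real i + (real i)^2) - 2 * (real k - real i))
                   / ((2 * real k + 3 + real i) * real i * real k))
            \<le> ereal_of_enat (N_CM k n)"
proof -
  define P where "P = 5 * real i * real k - real k + real i + (real i)^2"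
  define D where "D = (2 * real k + 3 + real i) * real i * real k"
  have i1: "1 \<le> i" using ki ik by simp
  have Dpos: "D > 0" unfolding D_def using i1 ik by simp
  have kmi: "2 * (real k - real i) \<ge> 0" using ik by simp
  show ?thesis
  proof (cases "n = 0")
    case True
    have "(real n * P - 2 * (real k - real i)) / D \<le> 0"
      using True kmi Dpos by (simp add: divide_nonpos_pos)
    then have "ereal ((real n * P - 2 * (real k - real i)) / D) \<le> 0" by simp
    also have "0 \<le> ereal_of_enat (N_CM k n)" by (rule ereal_of_enat_nonneg)
    finally show ?thesis unfolding P_def D_def .
  next
    case False
    show ?thesis
    proof (cases "n < k")
      case True
      then have "N_CM k n = top" using N_inf en False by simp
      then show ?thesis by (simp add: top_enat_def)
    next
      case False
      then have kn: "k \<le> n" by simp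
      define m where "m = (3 * n + k + 1) div (k + 2)"
      have k14: "2 ^ 14 \<le> k" using k0 by simp
      have Nm: "enat m \<le> N_CM k n" unfolding m_def using N_lower(1)[OF ek en k14 kn] .
      have m3: "3 * real n \<le> real m * (real k + 2)" unfolding m_def using N_lower(2)[OF ek en k14 kn] .
      have poly: "(real k + 2) * P \<le> 3 * D" unfolding P_def D_def
        using poly_ineq[of "real i" "real k"] i1 ik k14 by simp
      have a: "real n * ((real k + 2) * P) \<le> real n * (3 * D)" by (rule mult_left_mono[OF poly]) simp
      have b: "3 * real n * D \<le> real m * (real k + 2) * D" by (rule mult_right_mono[OF m3]) (use Dpos in simp)
      have "(real k + 2) * (real n * P) \<le> (real k + 2) * (real m * D)"
        using a b by (simp add: algebra_simps)
      then have "real n * P \<le> real m * D" by (rule mult_left_le_imp_le) simp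
      then have "real n * P - 2 * (real k - real i) \<le> real m * D" using kmi by linarith
      then have "(real n * P - 2 * (real k - real i)) / D \<le> real m"
        using Dpos by (simp add: pos_divide_le_eq)
      then have "ereal ((real n * P - 2 * (real k - real i)) / D) \<le> ereal_of_enat (enat m)" by simp
      also have "\<dots> \<le> ereal_of_enat (N_CM k n)" using Nm by (simp only: ereal_of_enat_le_iff)
      finally show ?thesis unfolding P_def D_def .
    qed
  qed
qed

lemma part2:
  assumes "0 < \<epsilon>" and k0: "2 ^ 14 < k" and ek: "even k" and np: "0 < n" and en: "even n"
  shows "ereal ((11/5 - \<epsilon>) * real n / real k) < ereal_of_enat (N_CM k n)"
proof (cases "n < k")
  case True
  then have "N_CM k n = top" using N_inf en np by simp
  then show ?thesis by (simp add: top_enat_def)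
next
  case False
  then have kn: "k \<le> n" by simp
  define m where "m = (3 * n + k + 1) div (k + 2)"
  have k14: "2 ^ 14 \<le> k" using k0 by simp
  have Nm: "enat m \<le> N_CM k n" unfolding m_def using N_lower(1)[OF ek en k14 kn] .
  have m3: "3 * real n \<le> real m * (real k + 2)" unfolding m_def using N_lower(2)[OF ek en k14 kn] .
  have kr: "real k \<ge> 2 ^ 14" using k14 by (metis of_nat_le_iff of_nat_numeral of_nat_power)
  have npos: "real n > 0" using np by simp
  have c1: "11 * real n * (real k + 2) < 15 * real n * real k"
  proof -
    have "22 * real n < 4 * real k * real n" using kr npos by simp
    then show ?thesis by (simp add: algebra_simps)
  qed
  have c2: "15 * real n * real k \<le> 5 * real k * (real m * (real k + 2))"
    using mult_left_mono[OF m3, of "5 * real k"] by (simp add: algebra_simps)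
  have "(real k + 2) * (11 * real n) < (real k + 2) * (5 * real m * real k)"
    using c1 c2 by (simp add: algebra_simps)
  then have c3: "11 * real n < 5 * real m * real k" using mult_less_cancel_left_pos[of "real k + 2"] by simp
  have "(11/5 - \<epsilon>) * real n \<le> 11/5 * real n" using assms(1) npos by simp
  also have "\<dots> < real m * real k" using c3 by simp
  finally have "(11/5 - \<epsilon>) * real n / real k < real m"
    using kr by (simp add: pos_divide_less_eq)
  then have "ereal ((11/5 - \<epsilon>) * real n / real k) < ereal_of_enat (enat m)" by simp
  also have "\<dots> \<le> ereal_of_enat (N_CM k n)" using Nm by (simp only: ereal_of_enat_le_iff)
  finally show ?thesis .
qed

theorem theorem8:
  shows "(\<exists>k0::nat. \<forall>k n i :: nat. k > k0 \<and> even k \<and> even n \<and> k < 2 * i \<and> i < k \<longrightarrow>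
            ereal ((real n * (5 * real i * real k - real k + real i + (real i)^2) - 2 * (real k - real i))
                   / ((2 * real k + 3 + real i) * real i * real k))
            \<le> ereal_of_enat (N_CM k n))
       \<and> (\<forall>\<epsilon>::real. \<epsilon> > 0 \<longrightarrow> (\<exists>k0::nat. \<forall>k::nat. k > k0 \<and> even k \<longrightarrow>
            (\<exists>n0::nat. \<forall>n::nat. n > n0 \<and> even n \<longrightarrow>
               ereal ((11/5 - \<epsilon>) * real n / real k) < ereal_of_enat (N_CM k n))))"
proof (rule conjI)
  show "\<exists>k0::nat. \<forall>k n i :: nat. k > k0 \<and> even k \<and> even n \<and> k < 2 * i \<and> i < k \<longrightarrow>
            ereal ((real n * (5 * real i * real k - real k + real i + (real i)^2) - 2 * (real k - real i))
                   / ((2 * real k + 3 + real i) * real i * real k))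
            \<le> ereal_of_enat (N_CM k n)"
    using part1 by blast
next
  show "\<forall>\<epsilon>::real. \<epsilon> > 0 \<longrightarrow> (\<exists>k0::nat. \<forall>k::nat. k > k0 \<and> even k \<longrightarrow>
            (\<exists>n0::nat. \<forall>n::nat. n > n0 \<and> even n \<longrightarrow>
               ereal ((11/5 - \<epsilon>) * real n / real k) < ereal_of_enat (N_CM k n)))"
  proof (intro allI impI)
    fix \<epsilon> :: real assume "\<epsilon> > 0"
    show "\<exists>k0::nat. \<forall>k::nat. k > k0 \<and> even k \<longrightarrow>
            (\<exists>n0::nat. \<forall>n::nat. n > n0 \<and> even n \<longrightarrow>
               ereal ((11/5 - \<epsilon>) * real n / real k) < ereal_of_enat (N_CM k n))"
    proof (rule exI[of _ "2 ^ 14"], intro allI impI)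
      fix k :: nat assume hk: "2 ^ 14 < k \<and> even k"
      show "\<exists>n0::nat. \<forall>n::nat. n > n0 \<and> even n \<longrightarrow>
               ereal ((11/5 - \<epsilon>) * real n / real k) < ereal_of_enat (N_CM k n)"
        using part2[OF \<open>\<epsilon> > 0\<close>] hk by blast
    qed
  qed
qed

end
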